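(* Suppose $(\mathcal I^*,\mathcal J^* )$ is an optimal basis of $V^{\mathrm{LP}}$ (as identified by Algorithm 1), with corresponding optimal primal solution $\bm x^*$ and corresponding optimal dual solution $\bm y^*$ (so $\bm y^*$ is supported on $\mathcal J^*$ and $A_{\mathcal J^*,\mathcal I^*}^\top\bm y^*_{\mathcal J^*}=\bm r_{\mathcal I^*}$). Let $\bm x^1,\dots,\bm x^N$ and $\bm c^N$ be generated by Algorithm 2 run with $N$ rounds and basis $(\mathcal I^*,\mathcal J^* )$. Then $$N\cdot V^{\mathrm{LP}}-\sum_{n=1}^N\bm r^\top\mathbb E[\bm x^n]\le\sum_{(s,a)\in\mathcal J^*}y^*_{(s,a)}\,\mathbb E\big[c^N_{(s,a)}\big].$$
   Context: Setting: a discounted MDP with state space $\mathcal S$, action space $\mathcal A$, discount $\gamma\in(0,1)$, unknown kernel $P$, cost $c(s,a)\in[0,1]$; a generative model returns $s'\sim P(\cdot|s,a)$ independently on each query. Basis functions $\phi_1,\dots,\phi_{d_1}$, positive weights $\mu(s)$, finite constraint index set $\mathcal K\subseteq\mathcal S\times\mathcal A$, $K=|\mathcal K|$. LP: $V^{\mathrm{LP}}=\max_{\bm x\in\mathbb R^{d_1}}\bm r^\top\bm x$ s.t. $A\bm x\le\bm c$, with $r_i=\sum_s\mu(s)\phi_i(s)$, $A_{(s,a),i}=\phi_i(s)-\gamma\sum_{s'}P(s'|s,a)\phi_i(s')$ for $(s,a)\in\mathcal K$, $\bm c=(c(s,a))_{(s,a)\in\mathcal K}$. An optimal basis is a pair $\mathcal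 I^*\subseteq[d_1]$, $\mathcal J^*\subseteq\mathcal K$, $|\mathcal I^*|=|\mathcal J^*|=d_2$, $A_{\mathcal J^*,\mathcal I^*}$ nonsingular, such that $\bm x^*$ with $\bm x^*_{[d_1]\setminus\mathcal I^*}=0$, $A_{\mathcal J^*,\mathcal I^*}\bm x^*_{\mathcal I^*}=\bm c_{\mathcal J^*}$ is optimal. Let $C$ be an upper bound on $2\|\bm x^*\|$. Algorithm 2 (input $N$, $\mathcal I^*,\mathcal J^*$): set $\mathcal H^1=\emptyset$, $\bm c^1=N\bm c$. For $n=1,\dots,N$: form the estimate $\hat A(\mathcal H^n)$ of $A$ from the data in $\mathcal H^n$ (empirical next-state distributions); let $\tilde{\bm x}^n$ have $\tilde{\bm x}^n_{[d_1]\setminus\mathcal I^*}=0$ and $\hat A_{\mathcal J^*,\mathcal I^*}(\mathcal H^n)\tilde{\bm x}^n_{\mathcal I^*}=\bm c^n_{\mathcal J^*}/(N-n+1)$; let $\bm x^n$ be the projection of $\tilde{\bm x}^n$ onto $\{\bm x:\|\bm x\|\le C\}$; for each $(s,a)\in\mathcal J^*$ query the generative model to get $s'(s,a)$ and add it to the data, $\mathcal H^{n+1}=\mathcal H^n\cup\{s'(s,a)\}$; form $A^n\in\mathbb R^{d_2\times d_2}$ with entries $A^n_{(s,a),i}=\phi_i(s)-\gamma\phi_i(s'(s,a))$ for $(s,a)\in\mathcal J^*$, $i\in\mathcal I^*$ (so $\mathbb E[A^n]=A_{\mathcal J^*,\mathcal I^*}$); update $\bm c^{n+1}_{\mathcal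 J^*}=\bm c^n_{\mathcal J^*}-A^n\bm x^n_{\mathcal I^*}$. Output $\bar{\bm x}^N=\frac1N\sum_{n=1}^N\bm x^n$. *)

theory Defs
  imports "HOL-Probability.Probability"
begin

text \<open>Vectors in R^{d1} are functions nat => real (only coordinates below d1 matter);
  vectors indexed by constraints are functions ('s * 'act) => real.\<close>

definition r_vec :: "('s::finite \<Rightarrow> real) \<Rightarrow> (nat \<Rightarrow> 's \<Rightarrow> real) \<Rightarrow> nat \<Rightarrow> real" where
  "r_vec \<mu> \<phi> i = (\<Sum>s\<in>UNIV. \<mu> s * \<phi> i s)"

definition A_mat :: "real \<Rightarrow> ('s::finite \<Rightarrow> 'act \<Rightarrow> 's pmf) \<Rightarrow> (nat \<Rightarrow> 's \<Rightarrow> real)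
    \<Rightarrow> ('s \<times> 'act) \<Rightarrow> nat \<Rightarrow> real" where
  "A_mat \<gamma> P \<phi> sa i =
     \<phi> i (fst sa) - \<gamma> * (\<Sum>s'\<in>UNIV. pmf (P (fst sa) (snd sa)) s' * \<phi> i s')"

definition lp_feasible :: "nat \<Rightarrow> ('s \<times> 'act) set \<Rightarrow> (('s \<times> 'act) \<Rightarrow> nat \<Rightarrow> real)
    \<Rightarrow> ('s \<times> 'act \<Rightarrow> real) \<Rightarrow> (nat \<Rightarrow> real) \<Rightarrow> bool" where
  "lp_feasible d1 K A c x \<longleftrightarrow> (\<forall>j\<in>K. (\<Sum>i<d1. A j i * x i) \<le> c j)"

definition V_LP :: "nat \<Rightarrow> ('s \<times> 'act) set \<Rightarrow> (('s \<times> 'act) \<Rightarrow> nat \<Rightarrow> real)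
    \<Rightarrow> ('s \<times> 'act \<Rightarrow> real) \<Rightarrow> (nat \<Rightarrow> real) \<Rightarrow> real" where
  "V_LP d1 K A c r = Sup {(\<Sum>i<d1. r i * x i) | x. lp_feasible d1 K A c x}"

definition lp_optimal :: "nat \<Rightarrow> ('s \<times> 'act) set \<Rightarrow> (('s \<times> 'act) \<Rightarrow> nat \<Rightarrow> real)
    \<Rightarrow> ('s \<times> 'act \<Rightarrow> real) \<Rightarrow> (nat \<Rightarrow> real) \<Rightarrow> (nat \<Rightarrow> real) \<Rightarrow> bool" where
  "lp_optimal d1 K A c r x \<longleftrightarrow> lp_feasible d1 K A c x \<and>
     (\<forall>z. lp_feasible d1 K A c z \<longrightarrow> (\<Sum>i<d1. r i * z i) \<le> (\<Sum>i<d1. r i * x i))"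

definition dual_feasible :: "nat \<Rightarrow> ('s \<times> 'act) set \<Rightarrow> (('s \<times> 'act) \<Rightarrow> nat \<Rightarrow> real)
    \<Rightarrow> (nat \<Rightarrow> real) \<Rightarrow> ('s \<times> 'act \<Rightarrow> real) \<Rightarrow> bool" where
  "dual_feasible d1 K A r y \<longleftrightarrow> (\<forall>j\<in>K. 0 \<le> y j) \<and> (\<forall>j. j \<notin> K \<longrightarrow> y j = 0) \<and>
     (\<forall>i<d1. (\<Sum>j\<in>K. A j i * y j) = r i)"

definition dual_optimal :: "nat \<Rightarrow> ('s \<times> 'act) set \<Rightarrow> (('s \<times> 'act) \<Rightarrow> nat \<Rightarrow> real)
    \<Rightarrow> ('s \<times> 'act \<Rightarrow> real) \<Rightarrow> (nat \<Rightarrow> real) \<Rightarrow> ('s \<times> 'act \<Rightarrow> real) \<Rightarrow> bool" where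
  "dual_optimal d1 K A c r y \<longleftrightarrow> dual_feasible d1 K A r y \<and>
     (\<forall>z. dual_feasible d1 K A r z \<longrightarrow> (\<Sum>j\<in>K. c j * y j) \<le> (\<Sum>j\<in>K. c j * z j))"

definition nonsingular_sub :: "(('s \<times> 'act) \<Rightarrow> nat \<Rightarrow> real) \<Rightarrow> ('s \<times> 'act) set \<Rightarrow> nat set \<Rightarrow> bool" where
  "nonsingular_sub A J I \<longleftrightarrow>
     (\<forall>v. (\<forall>j\<in>J. (\<Sum>i\<in>I. A j i * v i) = 0) \<longrightarrow> (\<forall>i\<in>I. v i = 0))"

definition optimal_basis :: "nat \<Rightarrow> ('s \<times> 'act) set \<Rightarrow> (('s \<times> 'act) \<Rightarrow> nat \<Rightarrow> real)
    \<Rightarrow> ('s \<times> 'act \<Rightarrow> real) \<Rightarrow> (nat \<Rightarrow> real) \<Rightarrow> nat set \<Rightarrow> ('s \<times> 'act) set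
    \<Rightarrow> (nat \<Rightarrow> real) \<Rightarrow> bool" where
  "optimal_basis d1 K A c r I J x \<longleftrightarrow>
     I \<subseteq> {..<d1} \<and> J \<subseteq> K \<and> card I = card J \<and> nonsingular_sub A J I \<and>
     (\<forall>i. i \<notin> I \<longrightarrow> x i = 0) \<and> (\<forall>j\<in>J. (\<Sum>i\<in>I. A j i * x i) = c j) \<and>
     lp_optimal d1 K A c r x"

definition enorm :: "nat \<Rightarrow> (nat \<Rightarrow> real) \<Rightarrow> real" where
  "enorm d1 x = sqrt (\<Sum>i<d1. (x i)\<^sup>2)"

definition proj_ball :: "nat \<Rightarrow> real \<Rightarrow> (nat \<Rightarrow> real) \<Rightarrow> (nat \<Rightarrow> real)" where
  "proj_ball d1 C x = (if enorm d1 x \<le> C then x else (\<lambda>i. (C / enorm d1 x) * x i))"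

text \<open>Algorithm 2. The random input is  ws :: nat => ('s*'act) => 's,  where  ws m (s,a)
  is the generative-model sample s'(s,a) obtained in round m (1 <= m <= N).
  The data H^n consists of the samples of rounds 1..n-1.\<close>

text \<open>Empirical estimate \<open>\<hat>A(H^n)\<close>: empirical next-state distribution of the samples of rounds
  1..n-1 (with no data the empirical mean is 0, by division by zero).\<close>
definition A_hat :: "real \<Rightarrow> (nat \<Rightarrow> 's \<Rightarrow> real) \<Rightarrow> (nat \<Rightarrow> ('s \<times> 'act) \<Rightarrow> 's) \<Rightarrow> nat
    \<Rightarrow> ('s \<times> 'act) \<Rightarrow> nat \<Rightarrow> real" where
  "A_hat \<gamma> \<phi> ws n sa i =
     \<phi> i (fst sa) - \<gamma> * ((\<Sum>m\<in>{1..<n}. \<phi> i (ws m sa)) / real (n - 1))"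

definition A_samp :: "real \<Rightarrow> (nat \<Rightarrow> 's \<Rightarrow> real) \<Rightarrow> (nat \<Rightarrow> ('s \<times> 'act) \<Rightarrow> 's) \<Rightarrow> nat
    \<Rightarrow> ('s \<times> 'act) \<Rightarrow> nat \<Rightarrow> real" where
  "A_samp \<gamma> \<phi> ws n sa i = \<phi> i (fst sa) - \<gamma> * \<phi> i (ws n sa)"

text \<open>\<open>\<tilde>x\<close>: supported on I and solving \<open>\<hat>A_{J,I} x_I = b_J\<close> (some solution if one exists,
  otherwise 0 -- this case does not occur when \<open>\<hat>A_{J,I}\<close> is nonsingular).\<close>
definition x_tilde :: "(('s \<times> 'act) \<Rightarrow> nat \<Rightarrow> real) \<Rightarrow> nat set \<Rightarrow> ('s \<times> 'act) set
    \<Rightarrow> ('s \<times> 'act \<Rightarrow> real) \<Rightarrow> (nat \<Rightarrow> real)" where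
  "x_tilde Ah I J b =
     (let S = {x. (\<forall>i. i \<notin> I \<longrightarrow> x i = 0) \<and> (\<forall>j\<in>J. (\<Sum>i\<in>I. Ah j i * x i) = b j)}
      in if S \<noteq> {} then (SOME x. x \<in> S) else (\<lambda>_. 0))"

definition alg_x_step :: "real \<Rightarrow> (nat \<Rightarrow> 's \<Rightarrow> real) \<Rightarrow> nat \<Rightarrow> real \<Rightarrow> nat \<Rightarrow> nat set
    \<Rightarrow> ('s \<times> 'act) set \<Rightarrow> (nat \<Rightarrow> ('s \<times> 'act) \<Rightarrow> 's) \<Rightarrow> nat \<Rightarrow> ('s \<times> 'act \<Rightarrow> real)
    \<Rightarrow> (nat \<Rightarrow> real)" where
  "alg_x_step \<gamma> \<phi> d1 C N I J ws n cn =
     proj_ball d1 C (x_tilde (A_hat \<gamma> \<phi> ws n) I J (\<lambda>j. cn j / real (N - n + 1)))"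

text \<open>Budget c^n (n >= 1): c^1 = N c, c^{n+1}_J = c^n_J - A^n x^n_I.
  The value at index 0 is an unused convention.\<close>
fun alg_c :: "real \<Rightarrow> (nat \<Rightarrow> 's \<Rightarrow> real) \<Rightarrow> nat \<Rightarrow> real \<Rightarrow> nat \<Rightarrow> nat set
    \<Rightarrow> ('s \<times> 'act) set \<Rightarrow> ('s \<times> 'act \<Rightarrow> real) \<Rightarrow> (nat \<Rightarrow> ('s \<times> 'act) \<Rightarrow> 's) \<Rightarrow> nat
    \<Rightarrow> ('s \<times> 'act \<Rightarrow> real)" where
  "alg_c \<gamma> \<phi> d1 C N I J c ws 0 = (\<lambda>j. real N * c j)"
| "alg_c \<gamma> \<phi> d1 C N I J c ws (Suc 0) = (\<lambda>j. real N * c j)"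
| "alg_c \<gamma> \<phi> d1 C N I J c ws (Suc (Suc m)) =
     (let cn = alg_c \<gamma> \<phi> d1 C N I J c ws (Suc m);
          xn = alg_x_step \<gamma> \<phi> d1 C N I J ws (Suc m) cn
      in (\<lambda>j. cn j - (\<Sum>i\<in>I. A_samp \<gamma> \<phi> ws (Suc m) j i * xn i)))"

definition alg_x :: "real \<Rightarrow> (nat \<Rightarrow> 's \<Rightarrow> real) \<Rightarrow> nat \<Rightarrow> real \<Rightarrow> nat \<Rightarrow> nat set
    \<Rightarrow> ('s \<times> 'act) set \<Rightarrow> ('s \<times> 'act \<Rightarrow> real) \<Rightarrow> (nat \<Rightarrow> ('s \<times> 'act) \<Rightarrow> 's) \<Rightarrow> nat
    \<Rightarrow> (nat \<Rightarrow> real)" where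
  "alg_x \<gamma> \<phi> d1 C N I J c ws n =
     alg_x_step \<gamma> \<phi> d1 C N I J ws n (alg_c \<gamma> \<phi> d1 C N I J c ws n)"

text \<open>Joint law of all generative-model queries: for each round m in {1..N} and each
  (s,a) in J an independent draw from P(.|s,a).\<close>
definition samples_pmf :: "('s \<Rightarrow> 'act \<Rightarrow> 's pmf) \<Rightarrow> nat \<Rightarrow> ('s \<times> 'act) set
    \<Rightarrow> (nat \<Rightarrow> ('s \<times> 'act) \<Rightarrow> 's) pmf" where
  "samples_pmf P N J =
     Pi_pmf {1..N} undefined (\<lambda>_. Pi_pmf J undefined (\<lambda>sa. P (fst sa) (snd sa)))"

end

theory Submission
  imports Defs
begin

lemma pair_prod:
  fixes f :: "'a \<Rightarrow> real" and g :: "'b \<Rightarrow> real"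
  assumes "finite (set_pmf p)" "finite (set_pmf q)"
  shows "measure_pmf.expectation (pair_pmf p q) (\<lambda>x. f (fst x) * g (snd x))
       = measure_pmf.expectation p f * measure_pmf.expectation q g"
proof -
  have "measure_pmf.expectation (pair_pmf p q) (\<lambda>x. f (fst x) * g (snd x))
      = (\<Sum>x\<in>set_pmf p \<times> set_pmf q. f (fst x) * g (snd x) * pmf (pair_pmf p q) x)"
    by (rule integral_measure_pmf_real) (use assms in auto)
  also have "\<dots> = (\<Sum>(a,b)\<in>set_pmf p \<times> set_pmf q. (f a * pmf p a) * (g b * pmf q b))"
    by (rule sum.cong) (auto simp: pmf_pair)
  also have "\<dots> = (\<Sum>a\<in>set_pmf p. \<Sum>b\<in>set_pmf q. (f a * pmf p a) * (g b * pmf q b))"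
    by (rule sum.cartesian_product[symmetric])
  also have "\<dots> = (\<Sum>a\<in>set_pmf p. f a * pmf p a) * (\<Sum>b\<in>set_pmf q. g b * pmf q b)"
    by (simp add: sum_product)
  also have "\<dots> = measure_pmf.expectation p f * measure_pmf.expectation q g"
    using assms by (simp add: integral_measure_pmf_real)
  finally show ?thesis .
qed

lemma finite_Q:
  fixes P :: "'s::finite \<Rightarrow> 'act::finite \<Rightarrow> 's pmf"
  shows "finite (set_pmf (Pi_pmf J undefined (\<lambda>sa. P (fst sa) (snd sa))))"
  by (simp add: set_Pi_pmf finite_PiE_dflt)

lemma finite_PiQ:
  fixes P :: "'s::finite \<Rightarrow> 'act::finite \<Rightarrow> 's pmf"
  assumes "finite B"
  shows "finite (set_pmf (Pi_pmf B undefined (\<lambda>_. Pi_pmf J undefined (\<lambda>sa. P (fst sa) (snd sa)))))"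
  using assms by (simp add: set_Pi_pmf finite_PiE_dflt finite_Q)

lemma finite_samples:
  fixes P :: "'s::finite \<Rightarrow> 'act::finite \<Rightarrow> 's pmf"
  shows "finite (set_pmf (samples_pmf P N J))"
  unfolding samples_pmf_def by (rule finite_PiQ) simp

lemma indep_round:
  fixes P :: "'s::finite \<Rightarrow> 'act::finite \<Rightarrow> 's pmf"
    and g :: "(nat \<Rightarrow> ('s \<times> 'act) \<Rightarrow> 's) \<Rightarrow> real" and h :: "'s \<Rightarrow> real"
  assumes n: "n \<in> {1..N}" and j: "j \<in> J"
    and g: "\<And>ws ws'. (\<forall>m<n. ws m = ws' m) \<Longrightarrow> g ws = g ws'"
  shows "measure_pmf.expectation (samples_pmf P N J) (\<lambda>ws. h (ws n j) * g ws)
       = measure_pmf.expectation (P (fst j) (snd j)) h * measure_pmf.expectation (samples_pmf P N J) g"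
proof -
  define Q where "Q = (\<lambda>_::nat. Pi_pmf J undefined (\<lambda>sa. P (fst sa) (snd sa)))"
  define B where "B = {1..N} - {n}"
  have fB: "finite B" "n \<notin> B" and ins: "{1..N} = insert n B" using n by (auto simp: B_def)
  have S: "samples_pmf P N J = map_pmf (\<lambda>(y,f). f(n:=y)) (pair_pmf (Q n) (Pi_pmf B undefined Q))"
    unfolding samples_pmf_def ins Q_def[symmetric] by (rule Pi_pmf_insert[OF fB])
  have gu: "g (f(n:=y)) = g f" for f y by (rule g) auto
  have fQ: "finite (set_pmf (Q n))" unfolding Q_def by (rule finite_Q)
  have fP: "finite (set_pmf (Pi_pmf B undefined Q))" unfolding Q_def by (rule finite_PiQ[OF fB(1)])
  have "measure_pmf.expectation (samples_pmf P N J) (\<lambda>ws. h (ws n j) * g ws)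
      = measure_pmf.expectation (pair_pmf (Q n) (Pi_pmf B undefined Q)) (\<lambda>x. h (fst x j) * g (snd x))"
    unfolding S by (simp add: case_prod_beta gu)
  also have "\<dots> = measure_pmf.expectation (Q n) (\<lambda>y. h (y j)) * measure_pmf.expectation (Pi_pmf B undefined Q) g"
    by (rule pair_prod[OF fQ fP, of "\<lambda>y. h (y j)" g])
  also have "measure_pmf.expectation (Q n) (\<lambda>y. h (y j)) = measure_pmf.expectation (map_pmf (\<lambda>y. y j) (Q n)) h"
    by simp
  also have "map_pmf (\<lambda>y. y j) (Q n) = P (fst j) (snd j)"
    unfolding Q_def using j by (subst Pi_pmf_component) auto
  also have "measure_pmf.expectation (Pi_pmf B undefined Q) g = measure_pmf.expectation (samples_pmf P N J) g"
    unfolding S by (simp add: case_prod_beta gu)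
  finally show ?thesis .
qed


lemma A_hat_dep:
  assumes "\<forall>m<n. ws m = ws' m"
  shows "A_hat \<gamma> \<phi> ws n = A_hat \<gamma> \<phi> ws' n"
  unfolding A_hat_def using assms by (intro ext) (auto intro!: sum.cong)

lemma alg_x_step_dep:
  assumes "\<forall>m<n. ws m = ws' m"
  shows "alg_x_step \<gamma> \<phi> d1 C N I J ws n cn = alg_x_step \<gamma> \<phi> d1 C N I J ws' n cn"
  unfolding alg_x_step_def using A_hat_dep[OF assms] by simp

lemma alg_c_dep:
  "(\<forall>m<k. ws m = ws' m) \<Longrightarrow> alg_c \<gamma> \<phi> d1 C N I J c ws k = alg_c \<gamma> \<phi> d1 C N I J c ws' k"
proof (induction \<gamma> \<phi> d1 C N I J c ws k rule: alg_c.induct)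
  case (3 \<gamma> \<phi> d1 C N I J c ws m)
  have IH: "alg_c \<gamma> \<phi> d1 C N I J c ws (Suc m) = alg_c \<gamma> \<phi> d1 C N I J c ws' (Suc m)"
    using 3 by auto
  have X: "alg_x_step \<gamma> \<phi> d1 C N I J ws (Suc m) cn = alg_x_step \<gamma> \<phi> d1 C N I J ws' (Suc m) cn" for cn
    using 3(2) by (intro alg_x_step_dep) auto
  have W: "ws (Suc m) = ws' (Suc m)" using 3(2) by auto
  show ?case by (simp add: Let_def IH X A_samp_def W)
qed auto

lemma alg_x_dep:
  "(\<forall>m<n. ws m = ws' m) \<Longrightarrow> alg_x \<gamma> \<phi> d1 C N I J c ws n = alg_x \<gamma> \<phi> d1 C N I J c ws' n"
  unfolding alg_x_def using alg_c_dep[of n ws ws'] alg_x_step_dep[of n ws ws'] by simp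

lemma x_tilde_supp:
  assumes "i \<notin> I" shows "x_tilde Ah I J b i = 0"
proof -
  define S where "S = {x. (\<forall>i. i \<notin> I \<longrightarrow> x i = 0) \<and> (\<forall>j\<in>J. (\<Sum>i\<in>I. Ah j i * x i) = b j)}"
  show ?thesis
  proof (cases "S = {}")
    case False
    then obtain x0 where "x0 \<in> S" by blast
    hence "(SOME x. x \<in> S) \<in> S" by (metis someI_ex)
    thus ?thesis using False assms unfolding x_tilde_def Let_def S_def[symmetric] by (auto simp: S_def)
  qed (simp add: x_tilde_def Let_def S_def[symmetric])
qed

lemma alg_x_supp:
  "i \<notin> I \<Longrightarrow> alg_x \<gamma> \<phi> d1 C N I J c ws n i = 0"
  unfolding alg_x_def alg_x_step_def proj_ball_def by (simp add: x_tilde_supp)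

lemma alg_c_formula:
  "1 \<le> k \<Longrightarrow> alg_c \<gamma> \<phi> d1 C N I J c ws k j = real N * c j -
     (\<Sum>n\<in>{1..<k}. \<Sum>i\<in>I. A_samp \<gamma> \<phi> ws n j i * alg_x \<gamma> \<phi> d1 C N I J c ws n i)"
proof (induction k)
  case (Suc k)
  show ?case
  proof (cases k)
    case (Suc m)
    have "{1..<Suc (Suc m)} = insert (Suc m) {1..<Suc m}" by auto
    then show ?thesis using Suc.IH unfolding Suc by (simp add: Let_def alg_x_def)
  qed simp
qed simp



theorem lemma2:
  fixes P :: "'s::finite \<Rightarrow> 'act::finite \<Rightarrow> 's pmf"
    and cost :: "'s \<Rightarrow> 'act \<Rightarrow> real" and \<gamma> :: real and \<mu> :: "'s \<Rightarrow> real"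
    and \<phi> :: "nat \<Rightarrow> 's \<Rightarrow> real" and d1 :: nat and K :: "('s \<times> 'act) set"
    and I :: "nat set" and J :: "('s \<times> 'act) set"
    and xstar :: "nat \<Rightarrow> real" and ystar :: "'s \<times> 'act \<Rightarrow> real"
    and C :: real and N :: nat
  defines "A \<equiv> A_mat \<gamma> P \<phi>"
      and "r \<equiv> r_vec \<mu> \<phi>"
      and "c \<equiv> (\<lambda>sa. cost (fst sa) (snd sa))"
  assumes "0 < \<gamma>" and "\<gamma> < 1"
      and "\<And>s a. 0 \<le> cost s a \<and> cost s a \<le> 1"
      and "\<And>s. 0 < \<mu> s"
      and basis: "optimal_basis d1 K A c r I J xstar"
      and dual_supp: "\<And>j. j \<notin> J \<Longrightarrow> ystar j = 0"
      and dual_basis: "\<And>i. i \<in> I \<Longrightarrow> (\<Sum>j\<in>J. A j i * ystar j) = r i"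
      and dual_opt: "dual_optimal d1 K A c r ystar"
      and C_bound: "2 * enorm d1 xstar \<le> C"
  shows "real N * V_LP d1 K A c r
           - (\<Sum>n\<in>{1..N}. measure_pmf.expectation (samples_pmf P N J)
                (\<lambda>ws. \<Sum>i<d1. r i * alg_x \<gamma> \<phi> d1 C N I J c ws n i))
         \<le> (\<Sum>j\<in>J. ystar j * measure_pmf.expectation (samples_pmf P N J)
                (\<lambda>ws. alg_c \<gamma> \<phi> d1 C N I J c ws (N + 1) j))"
proof -
  define M where "M = samples_pmf P N J"
  define X where "X = (\<lambda>n ws. alg_x \<gamma> \<phi> d1 C N I J c ws n)"
  have int: "integrable (measure_pmf M) f" for f :: "_ \<Rightarrow> real"
    unfolding M_def by (rule integrable_measure_pmf_finite[OF finite_samples])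
  from basis have IS: "I \<subseteq> {..<d1}" and xz: "\<And>i. i \<notin> I \<Longrightarrow> xstar i = 0"
    and xJ: "\<And>j. j \<in> J \<Longrightarrow> (\<Sum>i\<in>I. A j i * xstar i) = c j"
    and opt: "lp_optimal d1 K A c r xstar"
    unfolding optimal_basis_def by auto
  have fI: "finite I" using IS finite_subset by blast
  have fJ: "finite J" by simp
  
  have Vx: "V_LP d1 K A c r = (\<Sum>i<d1. r i * xstar i)"
    unfolding V_LP_def
    by (rule cSup_eq_maximum) (use opt in \<open>auto simp: lp_optimal_def\<close>)
  have "(\<Sum>i<d1. r i * xstar i) = (\<Sum>i\<in>I. r i * xstar i)"
    by (rule sum.mono_neutral_right) (use IS xz in auto)
  also have "\<dots> = (\<Sum>i\<in>I. \<Sum>j\<in>J. A j i * ystar j * xstar i)"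
    by (rule sum.cong) (simp_all add: dual_basis[symmetric] sum_distrib_right)
  also have "\<dots> = (\<Sum>j\<in>J. ystar j * (\<Sum>i\<in>I. A j i * xstar i))"
    by (subst sum.swap) (simp add: sum_distrib_left algebra_simps)
  also have "\<dots> = (\<Sum>j\<in>J. ystar j * c j)"
    by (simp add: xJ)
  finally have V: "V_LP d1 K A c r = (\<Sum>j\<in>J. ystar j * c j)" using Vx by simp
  
  have EA: "measure_pmf.expectation M (\<lambda>ws. A_samp \<gamma> \<phi> ws n j i * X n ws i)
        = A j i * measure_pmf.expectation M (\<lambda>ws. X n ws i)"
    if n: "n \<in> {1..N}" and j: "j \<in> J" for n j i
  proof -
    have dep: "\<And>ws ws'. (\<forall>m<n. ws m = ws' m) \<Longrightarrow> X n ws i = X n ws' i"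
      unfolding X_def using alg_x_dep by metis
    have "measure_pmf.expectation M (\<lambda>ws. A_samp \<gamma> \<phi> ws n j i * X n ws i)
       = measure_pmf.expectation M (\<lambda>ws. \<phi> i (fst j) * X n ws i - \<gamma> * (\<phi> i (ws n j) * X n ws i))"
      by (simp add: A_samp_def algebra_simps)
    also have "\<dots> = \<phi> i (fst j) * measure_pmf.expectation M (\<lambda>ws. X n ws i)
        - \<gamma> * measure_pmf.expectation M (\<lambda>ws. \<phi> i (ws n j) * X n ws i)"
      by (simp add: int)
    also have "measure_pmf.expectation M (\<lambda>ws. \<phi> i (ws n j) * X n ws i)
       = measure_pmf.expectation (P (fst j) (snd j)) (\<phi> i) * measure_pmf.expectation M (\<lambda>ws. X n ws i)"
      unfolding M_def by (rule indep_round[OF n j dep])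
    also have "measure_pmf.expectation (P (fst j) (snd j)) (\<phi> i)
       = (\<Sum>s'\<in>UNIV. pmf (P (fst j) (snd j)) s' * \<phi> i s')"
      by (subst integral_measure_pmf_real[where A=UNIV]) (auto simp: mult.commute)
    finally show ?thesis by (simp add: A_def A_mat_def algebra_simps)
  qed
  have Ec: "measure_pmf.expectation M (\<lambda>ws. alg_c \<gamma> \<phi> d1 C N I J c ws (N + 1) j)
     = real N * c j - (\<Sum>n\<in>{1..N}. \<Sum>i\<in>I. A j i * measure_pmf.expectation M (\<lambda>ws. X n ws i))"
    if j: "j \<in> J" for j
  proof -
    have "measure_pmf.expectation M (\<lambda>ws. alg_c \<gamma> \<phi> d1 C N I J c ws (N + 1) j)
       = measure_pmf.expectation M (\<lambda>ws. real N * c j -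
          (\<Sum>n\<in>{1..N}. \<Sum>i\<in>I. A_samp \<gamma> \<phi> ws n j i * X n ws i))"
      unfolding X_def
      by (intro arg_cong[where f="measure_pmf.expectation M"] ext)
         (simp add: alg_c_formula atLeastLessThanSuc_atLeastAtMost)
    also have "\<dots> = real N * c j - (\<Sum>n\<in>{1..N}. \<Sum>i\<in>I.
           measure_pmf.expectation M (\<lambda>ws. A_samp \<gamma> \<phi> ws n j i * X n ws i))"
      by (simp add: int integral_sum)
    also have "\<dots> = real N * c j - (\<Sum>n\<in>{1..N}. \<Sum>i\<in>I. A j i * measure_pmf.expectation M (\<lambda>ws. X n ws i))"
      using EA j by simp
    finally show ?thesis .
  qed
  
  have "(\<Sum>j\<in>J. ystar j * measure_pmf.expectation M (\<lambda>ws. alg_c \<gamma> \<phi> d1 C N I J c ws (N + 1) j))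
      = (\<Sum>j\<in>J. ystar j * (real N * c j - (\<Sum>n\<in>{1..N}. \<Sum>i\<in>I. A j i * measure_pmf.expectation M (\<lambda>ws. X n ws i))))"
    using Ec by (intro sum.cong) simp_all
  also have "\<dots> = real N * (\<Sum>j\<in>J. ystar j * c j)
      - (\<Sum>n\<in>{1..N}. \<Sum>i\<in>I. (\<Sum>j\<in>J. A j i * ystar j) * measure_pmf.expectation M (\<lambda>ws. X n ws i))"
    by (simp add: right_diff_distrib sum_subtractf sum_distrib_left sum_distrib_right
        algebra_simps sum.swap[of _ J])
  also have "\<dots> = real N * V_LP d1 K A c r
      - (\<Sum>n\<in>{1..N}. \<Sum>i\<in>I. r i * measure_pmf.expectation M (\<lambda>ws. X n ws i))"
    by (simp add: V dual_basis)
  also have "(\<Sum>n\<in>{1..N}. \<Sum>i\<in>I. r i * measure_pmf.expectation M (\<lambda>ws. X n ws i))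
      = (\<Sum>n\<in>{1..N}. measure_pmf.expectation M (\<lambda>ws. \<Sum>i<d1. r i * X n ws i))"
  proof (rule sum.cong)
    fix n
    have "measure_pmf.expectation M (\<lambda>ws. \<Sum>i<d1. r i * X n ws i)
        = (\<Sum>i<d1. r i * measure_pmf.expectation M (\<lambda>ws. X n ws i))"
      by (simp add: int integral_sum)
    also have "\<dots> = (\<Sum>i\<in>I. r i * measure_pmf.expectation M (\<lambda>ws. X n ws i))"
      by (rule sum.mono_neutral_right) (use IS in \<open>auto simp: X_def alg_x_supp\<close>)
    finally show "(\<Sum>i\<in>I. r i * measure_pmf.expectation M (\<lambda>ws. X n ws i))
        = measure_pmf.expectation M (\<lambda>ws. \<Sum>i<d1. r i * X n ws i)" by simp
  qed simp
  finally show ?thesis unfolding M_def X_def by simp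
qed

end
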